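(* Let $\psi\in\mathfrak M^+_\infty$, $\beta\in\mathbb R$, and let $n\in\mathbb N$ satisfy $\eta(n)-n\ge a>1$, $\mu(n)\ge b>2$. Define $$\Psi^*_{\beta,n}(t)=\psi(n)\sum_{k=2n-[\eta(n)]+1}^{n-1}\Big(1-\frac{n-k}{[\eta(n)]-n}\Big)\cos\Big(kt-\frac{\beta\pi}2\Big)+\sum_{k=n}^\infty\psi(k)\cos\Big(kt-\frac{\beta\pi}2\Big),$$ where $[\cdot]$ is the integer part. Then: (i) for $0<|t|\le\pi$, $\displaystyle|\Psi^*_{\beta,n}(t)|\le\pi^2\Big(\frac{2(b+1)^2}{b^2}+\frac{a}{a-1}\Big)\frac{\psi(n)}{\eta(n)-n}\,\frac1{t^2}$; (ii) for all $t\in\mathbb R$, $\displaystyle|\Psi^*_{\beta,n}(t)|\le\Big(\frac{2b}{b-2}+\frac1a+\frac12\Big)\psi(n)(\eta(n)-n)$; (iii) for every $1\le q\le\infty$, $\displaystyle\|\Psi^*_{\beta,n}\|_q\le2(1+\pi^2)\Big(\frac{2b}{b-2}+\frac{a}{a-1}\Big)\psi(n)(\eta(n)-n)^{1-1/q}$, where the norm is taken over one period.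
   Context: Let $\mathfrak M$ be the set of positive, continuous, convex-downward functions $\psi(t)$ of $t\ge1$ with $\lim_{t\to\infty}\psi(t)=0$. For $\psi\in\mathfrak M$ put $\eta(t)=\eta(\psi;t)=\psi^{-1}(\psi(t)/2)$, where $\psi^{-1}$ is the inverse function of $\psi$, and $\mu(t)=\mu(\psi;t)=t/(\eta(t)-t)$. Let $\mathfrak M^+_\infty$ be the set of $\psi\in\mathfrak M$ for which $\mu(\psi;t)$ increases monotonically to $\infty$ as $t\to\infty$. $\|g\|_q=(\int_0^{2\pi}|g|^q)^{1/q}$ for $1\le q<\infty$ and $\|g\|_\infty=\operatorname{ess\,sup}|g|$. *)

theory Defs
  imports "HOL-Analysis.Analysis" "HOL-Probability.Essential_Supremum"
begin

definition classM :: "(real \<Rightarrow> real) \<Rightarrow> bool" where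
  "classM \<psi> \<longleftrightarrow> (\<forall>t\<ge>1. \<psi> t > 0) \<and> continuous_on {1..} \<psi> \<and> convex_on {1..} \<psi>
     \<and> (\<psi> \<longlongrightarrow> 0) at_top"

definition eta :: "(real \<Rightarrow> real) \<Rightarrow> real \<Rightarrow> real" where
  "eta \<psi> t = inv_into {1..} \<psi> (\<psi> t / 2)"

definition mu :: "(real \<Rightarrow> real) \<Rightarrow> real \<Rightarrow> real" where
  "mu \<psi> t = t / (eta \<psi> t - t)"

definition classMplus_inf :: "(real \<Rightarrow> real) \<Rightarrow> bool" where
  "classMplus_inf \<psi> \<longleftrightarrow> classM \<psi> \<and> mono_on {1..} (mu \<psi>) \<and> filterlim (mu \<psi>) at_top at_top"

definition Psi_star :: "(real \<Rightarrow> real) \<Rightarrow> real \<Rightarrow> nat \<Rightarrow> real \<Rightarrow> real" where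
  "Psi_star \<psi> \<beta> n t =
     \<psi> (real n) * (\<Sum>k\<in>{2 * int n - \<lfloor>eta \<psi> (real n)\<rfloor> + 1 .. int n - 1}.
        (1 - real_of_int (int n - k) / real_of_int (\<lfloor>eta \<psi> (real n)\<rfloor> - int n))
          * cos (real_of_int k * t - \<beta> * pi / 2))
   + (\<Sum>j. \<psi> (real (j + n)) * cos (real (j + n) * t - \<beta> * pi / 2))"

end

theory Submission
  imports Defs
begin


locale PS =
  fixes \<psi> :: "real \<Rightarrow> real"
  assumes pos: "\<And>t. t \<ge> 1 \<Longrightarrow> \<psi> t > 0"
    and cont: "continuous_on {1..} \<psi>"
    and cvx: "convex_on {1..} \<psi>"
    and lim0: "(\<psi> \<longlongrightarrow> 0) at_top"
    and mono_mu: "mono_on {1..} (mu \<psi>)"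
begin

lemma cvx3:
  assumes "1 \<le> x" "x < y" "y < z"
  shows "\<psi> y * (z - x) \<le> (z - y) * \<psi> x + (y - x) * \<psi> z"
proof -
  define t where "t = (y - x) / (z - x)"
  have t: "0 \<le> t" "t \<le> 1" using assms by (auto simp: t_def field_simps)
  have tz: "t * (z - x) = y - x" using assms by (simp add: t_def)
  have e: "(1 - t) *\<^sub>R x + t *\<^sub>R z = y"
  proof -
    have "(1 - t) *\<^sub>R x + t *\<^sub>R z = x + t * (z - x)" by (simp add: algebra_simps)
    thus ?thesis using tz by simp
  qed
  have "\<psi> y \<le> (1 - t) * \<psi> x + t * \<psi> z"
    using convex_onD[OF cvx t, of x z] e assms by auto
  hence "\<psi> y * (z - x) \<le> ((1 - t) * \<psi> x + t * \<psi> z) * (z - x)"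
    using assms by (intro mult_right_mono) auto
  also have "\<dots> = (z - x) * \<psi> x + (t * (z - x)) * (\<psi> z - \<psi> x)"
    by (simp add: algebra_simps)
  also have "\<dots> = (z - y) * \<psi> x + (y - x) * \<psi> z"
    unfolding tz by (simp add: algebra_simps)
  finally show ?thesis .
qed

lemma strict_dec:
  assumes "1 \<le> x" "x < y"
  shows "\<psi> y < \<psi> x"
proof (rule ccontr)
  assume "\<not> \<psi> y < \<psi> x"
  hence le: "\<psi> x \<le> \<psi> y" by simp
  have "\<forall>z>y. \<psi> y \<le> \<psi> z"
  proof safe
    fix z assume "y < z"
    from cvx3[OF assms this] have "\<psi> y * (z - x) \<le> (z - y) * \<psi> x + (y - x) * \<psi> z" .
    moreover have "(z - y) * \<psi> x \<le> (z - y) * \<psi> y" using le \<open>y<z\<close> by (intro mult_left_mono) auto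
    ultimately have "(y - x) * \<psi> y \<le> (y - x) * \<psi> z" by (simp add: algebra_simps)
    thus "\<psi> y \<le> \<psi> z" using assms by simp
  qed
  moreover have "\<psi> y > 0" using pos assms by auto
  moreover have "eventually (\<lambda>z. \<psi> z < \<psi> y) at_top"
    using order_tendstoD(2)[OF lim0 \<open>\<psi> y > 0\<close>] .
  then obtain Z where "\<And>z. z \<ge> Z \<Longrightarrow> \<psi> z < \<psi> y" by (auto simp: eventually_at_top_linorder)
  ultimately show False
    by (metis linorder_not_le max.cobounded2 max.strict_coboundedI1 gt_ex order_less_le_trans) 
qed

lemma dec: "1 \<le> x \<Longrightarrow> x \<le> y \<Longrightarrow> \<psi> y \<le> \<psi> x"
  using strict_dec[of x y] by (cases "x = y") auto

lemma eta_props: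
  assumes "1 \<le> y"
  shows "1 \<le> eta \<psi> y" "\<psi> (eta \<psi> y) = \<psi> y / 2" "y < eta \<psi> y"
proof -
  have py: "\<psi> y > 0" using pos assms by auto
  have "eventually (\<lambda>z. \<psi> z < \<psi> y / 2) at_top"
    using order_tendstoD(2)[OF lim0, of "\<psi> y / 2"] py by simp
  then obtain Z where Z: "\<And>z. z \<ge> Z \<Longrightarrow> \<psi> z < \<psi> y / 2" by (auto simp: eventually_at_top_linorder)
  define z where "z = max Z y"
  have zlt: "\<psi> z < \<psi> y / 2" using Z by (simp add: z_def)
  have yz: "y \<le> z" by (simp add: z_def)
  moreover have "continuous_on {y..z} \<psi>" by (rule continuous_on_subset[OF cont]) (use assms in auto)
  ultimately obtain w where w: "y \<le> w" "w \<le> z" "\<psi> w = \<psi> y / 2"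
    using IVT2'[of \<psi> z "\<psi> y / 2" y] py yz zlt by fastforce
  have im: "\<psi> y / 2 \<in> \<psi> ` {1..}" using w assms by (intro image_eqI[of _ _ w]) auto
  show "1 \<le> eta \<psi> y" using inv_into_into[OF im] by (simp add: eta_def)
  show e: "\<psi> (eta \<psi> y) = \<psi> y / 2" using f_inv_into_f[OF im] by (simp add: eta_def)
  show "y < eta \<psi> y"
  proof (rule ccontr)
    assume "\<not> y < eta \<psi> y"
    hence "\<psi> y \<le> \<psi> (eta \<psi> y)" using dec[of "eta \<psi> y" y] inv_into_into[OF im] by (auto simp: eta_def)
    thus False using e py by simp
  qed
qed

lemma mu_pos: "1 \<le> y \<Longrightarrow> mu \<psi> y > 0"
  using eta_props[of y] by (simp add: mu_def)

lemma eta_gap: "1 \<le> y \<Longrightarrow> eta \<psi> y - y = y / mu \<psi> y"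
  using eta_props[of y] by (simp add: mu_def)

end



lemma sum_id_real: "2 * (\<Sum>i<N. real i) = real N * (real N - 1)"
  by (induction N) (auto simp: algebra_simps)

lemma poly_block:
  fixes N :: nat and D :: real
  assumes "D > 0" "real N - 1 < D"
  shows "real N - real N * (real N - 1) / (4 * D) \<le> 3 * D / 4 + 1"
proof -
  have key: "0 \<le> 3 * D^2 + 4 * D - 4 * D * real N + real N ^ 2 - real N"
  proof (cases "N \<le> 1")
    case True
    then consider "N = 0" | "N = 1" by linarith
    thus ?thesis using assms by cases auto
  next
    case False
    hence "real N \<ge> 2" by simp
    hence "3 * D - real N \<ge> 0" using assms by linarith
    moreover have "D + 1 - real N \<ge> 0" using assms by linarith
    ultimately have "(D + 1 - real N) * (3 * D - real N) \<ge> 0" by simp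
    thus ?thesis using assms by (simp add: algebra_simps power2_eq_square)
  qed
  have "real N - real N * (real N - 1) / (4 * D) = (4 * D * real N - real N * (real N - 1)) / (4 * D)"
    using assms by (simp add: field_simps)
  also have "\<dots> \<le> (4 * D * (3 * D / 4 + 1)) / (4 * D)"
    using key assms by (intro divide_right_mono) (auto simp: algebra_simps power2_eq_square)
  also have "\<dots> = 3 * D / 4 + 1" using assms by simp
  finally show ?thesis .
qed

lemma block_sum:
  fixes x D :: real
  assumes "0 \<le> x" "0 < D"
  shows "(\<Sum>k\<in>{nat \<lceil>x\<rceil>..<nat \<lceil>x + D\<rceil>}. 1 - (real k - x) / (2 * D)) \<le> 3 * D / 4 + 1"
proof -
  define k0 where "k0 = nat \<lceil>x\<rceil>"
  define k1 where "k1 = nat \<lceil>x + D\<rceil>"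
  define N where "N = k1 - k0"
  have k0x: "real k0 \<ge> x" using assms by (simp add: k0_def)
  show ?thesis
  proof (cases "k0 \<le> k1")
    case False
    hence emp: "{nat \<lceil>x\<rceil>..<nat \<lceil>x + D\<rceil>} = {}" unfolding k0_def[symmetric] k1_def[symmetric] by simp
    show ?thesis unfolding emp using assms by simp
  next
    case True
    have ND: "real N - 1 < D"
    proof (cases "N = 0")
      case True thus ?thesis using assms by simp
    next
      case False
      hence "k1 \<ge> 1" by (simp add: N_def)
      have "real k1 < x + D + 1" using assms by (simp add: k1_def) linarith
      hence "real k1 - 1 < x + D" by simp
      moreover have "real N = real k1 - real k0" using \<open>k0 \<le> k1\<close> by (simp add: N_def)
      ultimately show ?thesis using k0x by linarith
    qed
    have "(\<Sum>k\<in>{nat \<lceil>x\<rceil>..<nat \<lceil>x + D\<rceil>}. 1 - (real k - x) / (2 * D))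
        = (\<Sum>i<N. 1 - (real (k0 + i) - x) / (2 * D))"
      unfolding k0_def[symmetric] k1_def[symmetric] N_def
      by (subst sum.atLeastLessThan_shift_0) (simp add: lessThan_atLeast0 comp_def)
    also have "\<dots> \<le> (\<Sum>i<N. 1 - real i / (2 * D))"
      using k0x assms by (intro sum_mono) (auto simp: divide_right_mono)
    also have "\<dots> = real N - (\<Sum>i<N. real i) / (2 * D)"
      by (simp add: sum_subtractf sum_divide_distrib)
    also have "\<dots> = real N - real N * (real N - 1) / (4 * D)"
    proof -
      have h: "(\<Sum>i<N. real i) = real N * (real N - 1) / 2" using sum_id_real[of N] by simp
      show ?thesis unfolding h by simp
    qed
    also have "\<dots> \<le> 3 * D / 4 + 1" by (rule poly_block[OF assms(2) ND])
    finally show ?thesis .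
  qed
qed




locale PSn = PS +
  fixes n :: nat and a b :: real
  assumes n1: "n \<ge> 1" and La: "eta \<psi> (real n) - real n \<ge> a" and a1: "a > 1"
    and Lb: "mu \<psi> (real n) \<ge> b" and b2: "b > 2"
begin

definition "L = eta \<psi> (real n) - real n"
definition "\<rho> = 1 + L / real n"
definition "tt j = (eta \<psi> ^^ j) (real n)"

lemma L_ge: "L \<ge> a" and L_gt1: "L > 1" and L_pos: "L > 0"
  using La a1 by (auto simp: L_def)

lemma mu_n: "mu \<psi> (real n) = real n / L"
  by (simp add: mu_def L_def)

lemma nL: "real n \<ge> b * L"
  using Lb mu_n L_pos by (simp add: field_simps)

lemma n_pos: "real n > 0" using n1 by simp

lemma rho_le: "\<rho> \<le> 1 + 1 / b"
proof -
  have "L / real n \<le> 1 / b" using nL b2 L_pos n_pos by (simp add: field_simps)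
  thus ?thesis by (simp add: \<rho>_def)
qed

lemma rho_ge1: "\<rho> \<ge> 1" using L_pos n_pos by (simp add: \<rho>_def)

lemma tt_Suc: "tt (Suc j) = eta \<psi> (tt j)" by (simp add: tt_def)
lemma tt_0: "tt 0 = real n" by (simp add: tt_def)

lemma tt_props: "tt j \<ge> real n \<and> \<psi> (tt j) = \<psi> (real n) / 2 ^ j \<and> tt j \<le> real n * \<rho> ^ j"
proof (induction j)
  case 0 thus ?case by (simp add: tt_0)
next
  case (Suc j)
  have t1: "tt j \<ge> 1" using Suc n1 by linarith
  note ep = eta_props[OF t1]
  have "mu \<psi> (real n) \<le> mu \<psi> (tt j)"
    using mono_mu n1 Suc by (intro mono_onD[OF mono_mu]) auto
  hence gap: "tt (Suc j) - tt j \<le> tt j * L / real n"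
  proof -
    have "tt (Suc j) - tt j = tt j / mu \<psi> (tt j)" using eta_gap[OF t1] by (simp add: tt_Suc)
    also have "\<dots> \<le> tt j / mu \<psi> (real n)"
      using mu_pos[OF t1] mu_pos[of "real n"] n1 t1 \<open>mu \<psi> (real n) \<le> mu \<psi> (tt j)\<close>
      by (intro divide_left_mono) auto
    also have "\<dots> = tt j * L / real n" using mu_n L_pos n_pos by simp
    finally show ?thesis .
  qed
  have "tt (Suc j) \<le> tt j * \<rho>" using gap by (simp add: \<rho>_def field_simps)
  also have "\<dots> \<le> real n * \<rho> ^ j * \<rho>" using Suc rho_ge1 by (intro mult_right_mono) auto
  finally show ?case using Suc ep by (simp add: tt_Suc mult.commute mult.left_commute)
qed

lemma tt_ge: "tt j \<ge> real n" using tt_props by blast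
lemma tt_ge1: "tt j \<ge> 1" using tt_ge[of j] n1 by linarith
lemma psi_tt: "\<psi> (tt j) = \<psi> (real n) / 2 ^ j" using tt_props by blast
lemma tt_mono_step: "tt j < tt (Suc j)" using eta_props(3)[OF tt_ge1] by (simp add: tt_Suc)

lemma gap_le: "tt (Suc j) - tt j \<le> L * \<rho> ^ j"
proof -
  have t1: "tt j \<ge> 1" by (rule tt_ge1)
  have "mu \<psi> (real n) \<le> mu \<psi> (tt j)"
    using mono_mu n1 tt_ge[of j] by (intro mono_onD[OF mono_mu]) auto
  have "tt (Suc j) - tt j = tt j / mu \<psi> (tt j)" using eta_gap[OF t1] by (simp add: tt_Suc)
  also have "\<dots> \<le> tt j / mu \<psi> (real n)"
    using mu_pos[OF t1] mu_pos[of "real n"] n1 t1 \<open>mu \<psi> (real n) \<le> mu \<psi> (tt j)\<close>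
    by (intro divide_left_mono) auto
  also have "\<dots> = tt j * L / real n" using mu_n L_pos n_pos by simp
  also have "\<dots> \<le> real n * \<rho> ^ j * L / real n"
    using tt_props[of j] L_pos n_pos by (intro divide_right_mono mult_right_mono) auto
  also have "\<dots> = L * \<rho> ^ j" using n_pos by simp
  finally show ?thesis .
qed

lemma chord:
  assumes "tt j \<le> k" "k < tt (Suc j)"
  shows "\<psi> k \<le> \<psi> (tt j) * (1 - (k - tt j) / (2 * (tt (Suc j) - tt j)))"
proof (cases "k = tt j")
  case True thus ?thesis by simp
next
  case False
  hence lt: "tt j < k" using assms by simp
  define D where "D = tt (Suc j) - tt j"
  have D: "D > 0" using tt_mono_step[of j] by (simp add: D_def)
  have half: "\<psi> (tt (Suc j)) = \<psi> (tt j) / 2" using eta_props(2)[OF tt_ge1[of j]] by (simp add: tt_Suc)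
  have "\<psi> k * D \<le> (tt (Suc j) - k) * \<psi> (tt j) + (k - tt j) * \<psi> (tt (Suc j))"
    using cvx3[OF tt_ge1 lt assms(2)] by (simp add: D_def)
  also have "\<dots> = \<psi> (tt j) * (D - (k - tt j) / 2)" unfolding half D_def by (simp add: algebra_simps)
  finally have "\<psi> k * D \<le> \<psi> (tt j) * (D - (k - tt j) / 2)" .
  hence "\<psi> k \<le> \<psi> (tt j) * (D - (k - tt j) / 2) / D" using D by (simp add: field_simps)
  also have "\<dots> = \<psi> (tt j) * (1 - (k - tt j) / (2 * D))" using D by (simp add: field_simps)
  finally show ?thesis by (simp add: D_def)
qed

definition "cc j = nat \<lceil>tt j\<rceil>"

lemma cc_0: "cc 0 = n" by (simp add: cc_def tt_0)
lemma cc_mono: "cc j \<le> cc (Suc j)"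
  unfolding cc_def using tt_mono_step[of j] by (intro nat_mono ceiling_mono) simp

lemma block:
  "(\<Sum>k\<in>{cc j..<cc (Suc j)}. \<psi> (real k)) \<le> \<psi> (real n) / 2 ^ j * (3 * (L * \<rho> ^ j) / 4 + 1)"
proof -
  define D where "D = tt (Suc j) - tt j"
  have D: "D > 0" using tt_mono_step[of j] by (simp add: D_def)
  have x0: "0 \<le> tt j" using tt_ge1[of j] by simp
  have ts: "tt (Suc j) = tt j + D" by (simp add: D_def)
  have "(\<Sum>k\<in>{cc j..<cc (Suc j)}. \<psi> (real k)) \<le>
        (\<Sum>k\<in>{cc j..<cc (Suc j)}. \<psi> (tt j) * (1 - (real k - tt j) / (2 * D)))"
  proof (intro sum_mono)
    fix k assume k: "k \<in> {cc j..<cc (Suc j)}"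
    have "tt j \<le> real k" using k by (simp add: cc_def)
    moreover have "real k < tt (Suc j)" using k x0 D by (simp add: cc_def ts) linarith
    ultimately show "\<psi> (real k) \<le> \<psi> (tt j) * (1 - (real k - tt j) / (2 * D))"
      using chord[of j "real k"] by (simp add: D_def)
  qed
  also have "\<dots> = \<psi> (tt j) * (\<Sum>k\<in>{cc j..<cc (Suc j)}. (1 - (real k - tt j) / (2 * D)))"
    by (simp add: sum_distrib_left)
  also have "\<dots> \<le> \<psi> (tt j) * (3 * D / 4 + 1)"
    using block_sum[OF x0 D] pos[OF tt_ge1[of j]] unfolding cc_def ts
    by (intro mult_left_mono) auto
  also have "\<dots> \<le> \<psi> (tt j) * (3 * (L * \<rho> ^ j) / 4 + 1)"
    using gap_le[of j] pos[OF tt_ge1[of j]] by (intro mult_left_mono) (auto simp: D_def)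
  finally show ?thesis by (simp add: psi_tt)
qed

lemma cumul:
  "(\<Sum>k\<in>{n..<cc J}. \<psi> (real k)) \<le> (\<Sum>j<J. \<psi> (real n) / 2 ^ j * (3 * (L * \<rho> ^ j) / 4 + 1))"
proof (induction J)
  case 0 thus ?case by (simp add: cc_0)
next
  case (Suc J)
  have le: "n \<le> cc J"
  proof -
    have "\<And>J. cc 0 \<le> cc J" by (rule lift_Suc_mono_le[of cc]) (use cc_mono in auto)
    thus ?thesis using cc_0 by metis
  qed
  have "(\<Sum>k\<in>{n..<cc (Suc J)}. \<psi> (real k)) = (\<Sum>k\<in>{n..<cc J}. \<psi> (real k)) + (\<Sum>k\<in>{cc J..<cc (Suc J)}. \<psi> (real k))"
    using le cc_mono[of J] by (simp add: sum.atLeastLessThan_concat)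
  thus ?case using Suc block[of J] by simp
qed

lemma geom_le:
  fixes r :: real assumes "0 \<le> r" "r < 1" shows "(\<Sum>j<J. r ^ j) \<le> 1 / (1 - r)"
proof -
  have "(\<Sum>j<J. r ^ j) = (1 - r ^ J) / (1 - r)" using assms by (simp add: sum_gp_strict)
  also have "\<dots> \<le> 1 / (1 - r)" using assms by (intro divide_right_mono) auto
  finally show ?thesis .
qed

definition "Tb = \<psi> (real n) * (3 * L / 4 * (2 * b / (b - 1)) + 2)"

lemma cumul_bound: "(\<Sum>j<J. \<psi> (real n) / 2 ^ j * (3 * (L * \<rho> ^ j) / 4 + 1)) \<le> Tb"
proof -
  have pn: "\<psi> (real n) > 0" using pos n1 by simp
  have "1 / b < 1" using b2 by simp
  hence r0: "0 \<le> \<rho> / 2" "\<rho> / 2 < 1" using rho_le rho_ge1 by auto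
  have "(\<Sum>j<J. \<psi> (real n) / 2 ^ j * (3 * (L * \<rho> ^ j) / 4 + 1))
      = \<psi> (real n) * (3 * L / 4 * (\<Sum>j<J. (\<rho> / 2) ^ j) + (\<Sum>j<J. (1 / 2) ^ j))"
    by (simp add: sum_distrib_left sum.distrib algebra_simps power_divide)
  also have "\<dots> \<le> \<psi> (real n) * (3 * L / 4 * (1 / (1 - \<rho> / 2)) + 1 / (1 - 1 / 2))"
    using geom_le[OF r0] geom_le[of "1/2" J] pn L_pos
    by (intro mult_left_mono add_mono) auto
  also have "\<dots> \<le> Tb"
  proof -
    have "1 - \<rho> / 2 \<ge> (b - 1) / (2 * b)" using rho_le b2 by (simp add: field_simps)
    moreover have "(b - 1) / (2 * b) > 0" using b2 by simp
    ultimately have "1 / (1 - \<rho> / 2) \<le> 1 / ((b - 1) / (2 * b))"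
      by (intro divide_left_mono mult_pos_pos) auto
    hence "1 / (1 - \<rho> / 2) \<le> 2 * b / (b - 1)" by simp
    hence "3 * L / 4 * (1 / (1 - \<rho> / 2)) \<le> 3 * L / 4 * (2 * b / (b - 1))"
      using L_pos by (intro mult_left_mono) auto
    hence "3 * L / 4 * (1 / (1 - \<rho> / 2)) + 1 / (1 - 1 / 2) \<le> 3 * L / 4 * (2 * b / (b - 1)) + 2"
      by simp
    thus ?thesis unfolding Tb_def using pn by (intro mult_left_mono) auto
  qed
  finally show ?thesis .
qed

lemma tt_unbounded: "\<exists>J. tt J \<ge> y"
proof -
  define y' where "y' = max y 1"
  have py: "\<psi> y' > 0" using pos by (simp add: y'_def)
  have pn: "\<psi> (real n) > 0" using pos n1 by simp
  obtain J where J: "\<psi> (real n) / \<psi> y' < 2 ^ J" using real_arch_pow[of 2 "\<psi> (real n) / \<psi> y'"] by auto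
  have "\<psi> (tt J) < \<psi> y'" using J py by (simp add: psi_tt field_simps)
  hence "tt J > y'" using dec[of "tt J" y'] tt_ge1[of J] by (cases "tt J \<le> y'") auto
  thus ?thesis by (intro exI[of _ J]) (simp add: y'_def)
qed

lemma tail_partial: "(\<Sum>i<K. \<psi> (real (i + n))) \<le> Tb"
proof -
  obtain J where J: "tt J \<ge> real (n + K)" using tt_unbounded by blast
  hence cJ: "cc J \<ge> n + K" unfolding cc_def by linarith
  have "(\<Sum>i<K. \<psi> (real (i + n))) = (\<Sum>k\<in>{n..<n+K}. \<psi> (real k))"
    by (subst sum.atLeastLessThan_shift_0) (simp add: lessThan_atLeast0 comp_def add.commute)
  also have "\<dots> \<le> (\<Sum>k\<in>{n..<cc J}. \<psi> (real k))"
  proof (intro sum_mono2)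
    fix k assume "k \<in> {n..<cc J} - {n..<n + K}"
    hence "real k \<ge> 1" using n1 by auto
    thus "0 \<le> \<psi> (real k)" using pos[of "real k"] by simp
  qed (use cJ in auto)
  also have "\<dots> \<le> Tb" using cumul[of J] cumul_bound[of J] by linarith
  finally show ?thesis .
qed

lemma tail_summable: "summable (\<lambda>i. \<psi> (real (i + n)))"
  using tail_partial pos n1 by (intro summableI_nonneg_bounded[where x = Tb]) (auto intro: less_imp_le)

lemma tail_le: "(\<Sum>i. \<psi> (real (i + n))) \<le> Tb"
  using tail_summable tail_partial by (rule suminf_le_const)

end



lemma jordan:
  assumes "0 \<le> x" "x \<le> pi / 2"
  shows "2 * x / pi \<le> sin x"
proof -
  have cv: "convex_on {0..pi} (\<lambda>x. - sin x)"
  proof (rule f''_ge0_imp_convex[where f' = "\<lambda>x. - cos x" and f'' = "\<lambda>x. sin x"])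
    show "convex {0..pi}" by simp
    show "\<And>x. x \<in> {0..pi} \<Longrightarrow> ((\<lambda>x. - sin x) has_real_derivative - cos x) (at x)"
      by (auto intro!: derivative_eq_intros)
    show "\<And>x. x \<in> {0..pi} \<Longrightarrow> ((\<lambda>x. - cos x) has_real_derivative sin x) (at x)"
      by (auto intro!: derivative_eq_intros)
    show "\<And>x. x \<in> {0..pi} \<Longrightarrow> 0 \<le> sin x" by (auto intro: sin_ge_zero)
  qed
  define th where "th = 2 * x / pi"
  have th: "0 \<le> th" "th \<le> 1" using assms by (auto simp: th_def field_simps)
  have e: "(1 - th) *\<^sub>R 0 + th *\<^sub>R (pi / 2) = x" by (simp add: th_def)
  have "- sin x \<le> (1 - th) * (- sin 0) + th * (- sin (pi / 2))"
    using convex_onD[OF cv th, of 0 "pi/2"] e by simp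
  thus ?thesis by (simp add: th_def)
qed

context PSn begin

definition "m = nat \<lfloor>L\<rfloor>"
definition "p = n - m"

lemma m_ge1: "m \<ge> 1"
proof -
  have "\<lfloor>L\<rfloor> \<ge> 1" using L_gt1 by linarith
  hence "nat \<lfloor>L\<rfloor> \<ge> nat 1" by (rule nat_mono)
  thus ?thesis by (simp add: m_def)
qed
lemma m_le: "real m \<le> L" using L_pos by (simp add: m_def)
lemma m_gt: "L - 1 < real m" using L_pos by (simp add: m_def)
lemma m_lt_n: "m < n"
proof -
  have "real n \<ge> b * L" by (rule nL)
  moreover have "b * L > 2 * L" using b2 L_pos by simp
  ultimately have "real n > 2 * real m" using m_le by linarith
  thus ?thesis using m_ge1 by linarith
qed
lemma p_ge1: "p \<ge> 1" using m_lt_n by (simp add: p_def)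
lemma mp: "m + p = n" using m_lt_n by (simp add: p_def)

lemma floor_eta: "\<lfloor>eta \<psi> (real n)\<rfloor> = int n + int m"
proof -
  have "eta \<psi> (real n) = real n + L" by (simp add: L_def)
  hence "\<lfloor>eta \<psi> (real n)\<rfloor> = int n + \<lfloor>L\<rfloor>" by simp
  thus ?thesis using L_pos by (simp add: m_def)
qed

definition "d j = (if j \<le> m then \<psi> (real n) * real j / real m else \<psi> (real (j + p)))"

lemma d_ge: "j \<ge> m \<Longrightarrow> d j = \<psi> (real (j + p))"
proof -
  have "real (m + p) = real n" using mp by simp
  thus "j \<ge> m \<Longrightarrow> d j = \<psi> (real (j + p))" using m_ge1 by (auto simp: d_def)
qed
lemma d_0: "d 0 = 0" by (simp add: d_def)
lemma d_nonneg: "d j \<ge> 0"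
  using pos[of "real (j + p)"] pos[of "real n"] n1 p_ge1 by (auto simp: d_def)

lemma d_shift: "d (i + m) = \<psi> (real (i + n))"
  using d_ge[of "i + m"] mp by (simp add: add.assoc)

lemma d_summable: "summable d"
proof -
  have "summable (\<lambda>i. d (i + m))" unfolding d_shift by (rule tail_summable)
  thus ?thesis by (simp add: summable_iff_shift)
qed

lemma d_lt: "j \<le> m \<Longrightarrow> d j = \<psi> (real n) * real j / real m" by (simp add: d_def)

lemma fin_part:
  "\<psi> (real n) * (\<Sum>k\<in>{2 * int n - \<lfloor>eta \<psi> (real n)\<rfloor> + 1 .. int n - 1}.
        (1 - real_of_int (int n - k) / real_of_int (\<lfloor>eta \<psi> (real n)\<rfloor> - int n))
          * cos (real_of_int k * t - \<theta>))
   = (\<Sum>j<m. d j * cos (real (j + p) * t - \<theta>))"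
proof -
  have nmp: "int n = int m + int p" using mp by linarith
  have S: "{2 * int n - \<lfloor>eta \<psi> (real n)\<rfloor> + 1 .. int n - 1} = {int p + 1 .. int p + int m - 1}"
    unfolding floor_eta nmp by (simp add: algebra_simps)
  have W: "real_of_int (\<lfloor>eta \<psi> (real n)\<rfloor> - int n) = real m" unfolding floor_eta by simp
  have "(\<Sum>k\<in>{int p + 1 .. int p + int m - 1}.
        (1 - real_of_int (int n - k) / real m) * cos (real_of_int k * t - \<theta>))
      = (\<Sum>j\<in>{1..<m}. (1 - real_of_int (int n - int (p + j)) / real m) * cos (real (p + j) * t - \<theta>))"
  proof (rule sum.reindex_bij_witness[where i = "\<lambda>j. int (p + j)" and j = "\<lambda>k. nat (k - int p)"])
  qed auto
  also have "\<dots> = (\<Sum>j\<in>{1..<m}. d j * cos (real (j + p) * t - \<theta>) / \<psi> (real n))"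
  proof (rule sum.cong)
    fix j assume j: "j \<in> {1..<m}"
    have "real_of_int (int n - int (p + j)) = real m - real j" using mp j by simp
    moreover have "real m > 0" using m_ge1 by simp
    moreover have "\<psi> (real n) > 0" using pos n1 by simp
    ultimately show "(1 - real_of_int (int n - int (p + j)) / real m) * cos (real (p + j) * t - \<theta>)
        = d j * cos (real (j + p) * t - \<theta>) / \<psi> (real n)"
      using j by (simp add: d_lt field_simps add.commute)
  qed simp
  finally have A: "(\<Sum>k\<in>{int p + 1 .. int p + int m - 1}.
        (1 - real_of_int (int n - k) / real m) * cos (real_of_int k * t - \<theta>))
      = (\<Sum>j\<in>{1..<m}. d j * cos (real (j + p) * t - \<theta>)) / \<psi> (real n)"
    by (simp add: sum_divide_distrib)
  have B: "(\<Sum>j<m. d j * cos (real (j + p) * t - \<theta>)) = (\<Sum>j\<in>{1..<m}. d j * cos (real (j + p) * t - \<theta>))"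
  proof -
    have "{..<m} = insert 0 {1..<m}" using m_ge1 by auto
    thus ?thesis by (simp add: d_0)
  qed
  have "\<psi> (real n) > 0" using pos n1 by simp
  thus ?thesis unfolding S W A B by simp
qed

lemma dcos_summable: "summable (\<lambda>j. d j * cos (real (j + p) * t - \<theta>))"
  by (rule summable_comparison_test'[OF d_summable, of 0]) (simp add: abs_mult d_nonneg mult_left_le)

lemma Psi_eq: "Psi_star \<psi> \<beta> n t = (\<Sum>j. d j * cos (real (j + p) * t - \<beta> * pi / 2))"
proof -
  have "(\<Sum>j. d j * cos (real (j + p) * t - \<beta> * pi / 2))
     = (\<Sum>i. d (i + m) * cos (real (i + m + p) * t - \<beta> * pi / 2)) + (\<Sum>j<m. d j * cos (real (j + p) * t - \<beta> * pi / 2))"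
    by (rule suminf_split_initial_segment[OF dcos_summable])
  also have "(\<Sum>i. d (i + m) * cos (real (i + m + p) * t - \<beta> * pi / 2)) = (\<Sum>i. \<psi> (real (i + n)) * cos (real (i + n) * t - \<beta> * pi / 2))"
    unfolding d_shift using mp by (simp add: add.assoc)
  finally show ?thesis unfolding Psi_star_def fin_part by simp
qed


definition "D2 j = d (Suc j) - 2 * d j + (if j = 0 then 0 else d (j - 1))"

lemma cos_pm: fixes x t \<theta> :: real shows "cos ((x - 1) * t - \<theta>) + cos ((x + 1) * t - \<theta>) = 2 * cos t * cos (x * t - \<theta>)"
proof -
  have "cos ((x - 1) * t - \<theta>) = cos ((x * t - \<theta>) - t)" by (simp add: algebra_simps)
  moreover have "cos ((x + 1) * t - \<theta>) = cos ((x * t - \<theta>) + t)" by (simp add: algebra_simps)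
  ultimately show ?thesis by (simp add: cos_add cos_diff)
qed

lemma summable_d_bdd: "(\<And>j. \<bar>c j\<bar> \<le> 1) \<Longrightarrow> summable (\<lambda>j. d j * c j)"
  by (rule summable_comparison_test'[OF d_summable, of 0]) (simp add: abs_mult d_nonneg mult_left_le)

lemma identity:
  "(\<lambda>j. D2 j * cos ((real j + real p) * t - \<theta>)) sums
     ((2 * cos t - 2) * (\<Sum>j. d j * cos ((real j + real p) * t - \<theta>)))"
proof -
  define g where "g x = cos (x * t - \<theta>)" for x
  define s where "s = (\<Sum>j. d j * g (real j + real p))"
  define h1 where "h1 j = d j * g (real j + real p - 1)" for j
  define h2 where "h2 j = (if j = 0 then 0 else d (j - 1)) * g (real j + real p)" for j
  define S1 where "S1 = suminf h1"
  define S2 where "S2 = (\<Sum>j. d j * g (real j + real p + 1))"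
  have sm0: "summable (\<lambda>j. d j * g (real j + real p))" unfolding g_def by (rule summable_d_bdd) simp
  have sm1: "summable h1" unfolding h1_def g_def by (rule summable_d_bdd) simp
  have sm2: "summable (\<lambda>j. d j * g (real j + real p + 1))" unfolding g_def by (rule summable_d_bdd) simp
  have "h1 sums (S1 + h1 0)" using sm1 by (simp add: S1_def h1_def d_0 summable_sums)
  hence a1: "(\<lambda>j. d (Suc j) * g (real j + real p)) sums S1"
    by (subst (asm) sums_Suc_iff[symmetric]) (simp add: h1_def algebra_simps)
  have "(\<lambda>j. h2 (Suc j)) sums S2" using sm2 by (simp add: S2_def h2_def summable_sums algebra_simps)
  hence a2: "h2 sums S2" by (subst (asm) sums_Suc_iff) (simp add: h2_def)
  have a0: "(\<lambda>j. d j * g (real j + real p)) sums s" using sm0 by (simp add: s_def summable_sums)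
  have "(\<lambda>j. d (Suc j) * g (real j + real p) - 2 * (d j * g (real j + real p)) + h2 j) sums (S1 - 2 * s + S2)"
    by (intro sums_add sums_diff sums_mult a1 a2 a0)
  moreover have "(\<lambda>j. d (Suc j) * g (real j + real p) - 2 * (d j * g (real j + real p)) + h2 j)
      = (\<lambda>j. D2 j * g (real j + real p))"
    by (rule ext) (simp add: D2_def h2_def algebra_simps)
  moreover have "S1 + S2 = 2 * cos t * s"
  proof -
    have "h1 sums S1" using sm1 by (simp add: S1_def summable_sums)
    hence "(\<lambda>j. d j * g (real j + real p - 1)) sums S1" by (simp add: h1_def[abs_def])
    moreover have "(\<lambda>j. d j * g (real j + real p + 1)) sums S2" using sm2 by (simp add: S2_def summable_sums)
    ultimately have "(\<lambda>j. d j * g (real j + real p - 1) + d j * g (real j + real p + 1)) sums (S1 + S2)"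
      by (rule sums_add)
    moreover have "(\<lambda>j. d j * g (real j + real p - 1) + d j * g (real j + real p + 1))
        = (\<lambda>j. 2 * cos t * (d j * g (real j + real p)))"
    proof (rule ext)
      fix j
      have "g (real j + real p - 1) + g (real j + real p + 1) = 2 * cos t * g (real j + real p)"
        unfolding g_def by (rule cos_pm)
      thus "d j * g (real j + real p - 1) + d j * g (real j + real p + 1) = 2 * cos t * (d j * g (real j + real p))"
        by (simp add: algebra_simps) (metis distrib_left mult.left_commute)
    qed
    ultimately have "(\<lambda>j. 2 * cos t * (d j * g (real j + real p))) sums (S1 + S2)" by simp
    moreover have "(\<lambda>j. 2 * cos t * (d j * g (real j + real p))) sums (2 * cos t * s)"
      by (intro sums_mult a0)
    ultimately show ?thesis using sums_unique2 by blast
  qed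
  ultimately have "(\<lambda>j. D2 j * g (real j + real p)) sums ((2 * cos t - 2) * s)"
    by (simp add: algebra_simps)
  thus ?thesis by (simp add: g_def s_def)
qed


lemma mpos: "real m > 0" using m_ge1 by simp
lemma psin_pos: "\<psi> (real n) > 0" using pos n1 by simp

lemma D2_0: "D2 0 = \<psi> (real n) / real m"
  using m_ge1 by (simp add: D2_def d_lt d_0)

lemma D2_mid: "1 \<le> j \<Longrightarrow> j < m \<Longrightarrow> D2 j = 0"
proof -
  assume j: "1 \<le> j" "j < m"
  have "real (j - 1) = real j - 1" using j by simp
  thus "D2 j = 0" using j by (simp add: D2_def d_lt field_simps)
qed

lemma D2_m: "D2 m = \<psi> (real n + 1) - \<psi> (real n) - \<psi> (real n) / real m"
proof -
  have "d (Suc m) = \<psi> (real n + 1)" using d_ge[of "Suc m"] mp by (simp add: add.commute)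
  moreover have "d m = \<psi> (real n)" using d_lt[of m] mpos by simp
  moreover have "d (m - 1) = \<psi> (real n) * (real m - 1) / real m" using d_lt[of "m - 1"] m_ge1 by simp
  ultimately show ?thesis using m_ge1 mpos by (simp add: D2_def field_simps)
qed

lemma D2_big: "j > m \<Longrightarrow> D2 j = d (Suc j) - 2 * d j + d (j - 1) \<and> D2 j \<ge> 0"
proof -
  assume j: "j > m"
  define k where "k = real (j + p)"
  have k1: "k - 1 \<ge> 1" using j mp n1 by (simp add: k_def)
  have e1: "d (Suc j) = \<psi> (k + 1)" using d_ge[of "Suc j"] j by (simp add: k_def add.commute)
  have e2: "d j = \<psi> k" using d_ge[of j] j by (simp add: k_def)
  have e3: "d (j - 1) = \<psi> (k - 1)" using d_ge[of "j - 1"] j by (simp add: k_def of_nat_diff)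
  have "\<psi> k * ((k + 1) - (k - 1)) \<le> ((k + 1) - k) * \<psi> (k - 1) + (k - (k - 1)) * \<psi> (k + 1)"
    by (rule cvx3) (use k1 in auto)
  hence "0 \<le> \<psi> (k + 1) - 2 * \<psi> k + \<psi> (k - 1)" by simp
  thus ?thesis using j e1 e2 e3 by (simp add: D2_def)
qed

definition "Sb = 2 * \<psi> (real n) / real m + 2 * (\<psi> (real n) - \<psi> (real n + 1))"

lemma pA: "N < m \<Longrightarrow> (\<Sum>j<Suc N. \<bar>D2 j\<bar>) = \<psi> (real n) / real m"
proof (induction N)
  case 0 thus ?case using D2_0 psin_pos mpos by simp
next
  case (Suc N) thus ?case using D2_mid[of "Suc N"] by simp
qed

lemma pB: "(\<Sum>j<Suc m + k. \<bar>D2 j\<bar>) = Sb + d (Suc m + k) - d (m + k)"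
proof (induction k)
  case 0
  have "(\<Sum>j<Suc m. \<bar>D2 j\<bar>) = (\<Sum>j<m. \<bar>D2 j\<bar>) + \<bar>D2 m\<bar>" by simp
  also have "(\<Sum>j<m. \<bar>D2 j\<bar>) = \<psi> (real n) / real m"
    using pA[of "m - 1"] m_ge1 by simp
  also have "\<bar>D2 m\<bar> = \<psi> (real n) - \<psi> (real n + 1) + \<psi> (real n) / real m"
  proof -
    have "\<psi> (real n + 1) \<le> \<psi> (real n)" using dec[of "real n" "real n + 1"] n1 by simp
    moreover have "\<psi> (real n) / real m > 0" using psin_pos mpos by simp
    ultimately show ?thesis unfolding D2_m by simp
  qed
  moreover have "d (Suc m) = \<psi> (real n + 1)" using d_ge[of "Suc m"] mp by (simp add: add.commute)
  moreover have "d m = \<psi> (real n)" using d_lt[of m] mpos by simp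
  ultimately show ?case by (simp add: Sb_def)
next
  case (Suc k)
  have "(\<Sum>j<Suc m + Suc k. \<bar>D2 j\<bar>) = (\<Sum>j<Suc m + k. \<bar>D2 j\<bar>) + \<bar>D2 (Suc m + k)\<bar>" by simp
  also have "\<bar>D2 (Suc m + k)\<bar> = d (Suc (Suc m + k)) - 2 * d (Suc m + k) + d (m + k)"
    using D2_big[of "Suc m + k"] by simp
  finally show ?case using Suc by simp
qed

lemma pC: "(\<Sum>j<N. \<bar>D2 j\<bar>) \<le> Sb"
proof (cases "N \<ge> Suc m")
  case True
  then obtain k where N: "N = Suc m + k" by (metis le_add_diff_inverse)
  have "d (Suc m + k) \<le> d (m + k)"
    using d_ge[of "Suc m + k"] d_ge[of "m + k"] dec[of "real (m + k + p)" "real (Suc m + k + p)"] mp n1 by simp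
  thus ?thesis using pB[of k] N by simp
next
  case False
  hence "(\<Sum>j<N. \<bar>D2 j\<bar>) \<le> (\<Sum>j<Suc m + 0. \<bar>D2 j\<bar>)" by (intro sum_mono2) auto
  also have "\<dots> = Sb + d (Suc m) - d m" using pB[of 0] by simp
  also have "\<dots> \<le> Sb"
    using d_ge[of "Suc m"] d_ge[of m] dec[of "real (m + p)" "real (Suc m + p)"] mp n1 by simp
  finally show ?thesis .
qed

lemma main_bound: "\<bar>(2 * cos t - 2) * (\<Sum>j. d j * cos ((real j + real p) * t - \<theta>))\<bar> \<le> Sb"
proof -
  have sD: "summable (\<lambda>j. \<bar>D2 j\<bar>)" by (rule summableI_nonneg_bounded[where x = Sb]) (use pC in auto)
  have sE: "summable (\<lambda>j. \<bar>D2 j * cos ((real j + real p) * t - \<theta>)\<bar>)"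
    by (rule summable_comparison_test'[OF sD, of 0]) (simp add: abs_mult mult_left_le)
  have "(2 * cos t - 2) * (\<Sum>j. d j * cos ((real j + real p) * t - \<theta>)) = (\<Sum>j. D2 j * cos ((real j + real p) * t - \<theta>))"
    by (rule sums_unique[OF identity])
  also have "\<bar>\<dots>\<bar> \<le> (\<Sum>j. \<bar>D2 j * cos ((real j + real p) * t - \<theta>)\<bar>)" by (rule summable_rabs[OF sE])
  also have "\<dots> \<le> Sb"
  proof (rule suminf_le_const[OF sE])
    fix N
    have "(\<Sum>j<N. \<bar>D2 j * cos ((real j + real p) * t - \<theta>)\<bar>) \<le> (\<Sum>j<N. \<bar>D2 j\<bar>)"
      by (intro sum_mono) (simp add: abs_mult mult_left_le)
    thus "(\<Sum>j<N. \<bar>D2 j * cos ((real j + real p) * t - \<theta>)\<bar>) \<le> Sb" using pC[of N] by simp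
  qed
  finally show ?thesis .
qed

end


context PSn begin

lemma inv_m: "1 / real m \<le> a / ((a - 1) * L)"
proof -
  have "L - 1 \<ge> (a - 1) * L / a" using L_ge a1 by (simp add: field_simps)
  hence "real m \<ge> (a - 1) * L / a" using m_gt by linarith
  moreover have "(a - 1) * L / a > 0" using a1 L_pos by simp
  ultimately have "1 / real m \<le> 1 / ((a - 1) * L / a)" by (intro divide_left_mono) (use mpos a1 L_pos in \<open>auto simp: zero_less_mult_iff\<close>)
  thus ?thesis by simp
qed

lemma step_bound: "\<psi> (real n) - \<psi> (real n + 1) \<le> \<psi> (real n) * (b + 1) / (b * L)"
proof -
  define x where "x = real n * real n / (real n + L)"
  have "b * L > 2 * L" using b2 L_pos by simp
  hence nn: "real n > 2" and nLL: "real n \<ge> L" using nL L_gt1 by linarith+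
  have x1: "x \<ge> 1"
  proof -
    have "real n * real n \<ge> 2 * real n" using nn by (intro mult_right_mono) auto
    hence "real n * real n \<ge> real n + L" using nLL by linarith
    thus ?thesis using L_pos nn by (simp add: x_def field_simps)
  qed
  have xn: "x < real n" using L_pos nn by (simp add: x_def field_simps)
  have "mu \<psi> x \<le> mu \<psi> (real n)" using x1 xn by (intro mono_onD[OF mono_mu]) auto
  have "eta \<psi> x - x = x / mu \<psi> x" by (rule eta_gap[OF x1])
  also have "\<dots> \<ge> x / mu \<psi> (real n)"
    using mu_pos[OF x1] \<open>mu \<psi> x \<le> mu \<psi> (real n)\<close> x1 by (intro divide_left_mono) auto
  finally have "eta \<psi> x \<ge> x + x * L / real n" using mu_n L_pos nn by simp
  also have "x + x * L / real n = real n"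
  proof -
    have xe: "x * (real n + L) = real n * real n" using L_pos nn by (simp add: x_def)
    have "x + x * L / real n = x * (real n + L) / real n" using nn by (simp add: field_simps)
    also have "\<dots> = real n" unfolding xe using nn by simp
    finally show ?thesis .
  qed
  finally have en: "eta \<psi> x \<ge> real n" .
  have "\<psi> x = 2 * \<psi> (eta \<psi> x)" using eta_props(2)[OF x1] by simp
  also have "\<dots> \<le> 2 * \<psi> (real n)" using dec[OF _ en] n1 by simp
  finally have px: "\<psi> x \<le> 2 * \<psi> (real n)" .
  have "\<psi> (real n) * (real n + 1 - x) \<le> (real n + 1 - real n) * \<psi> x + (real n - x) * \<psi> (real n + 1)"
    by (rule cvx3[OF x1 xn]) simp
  hence "(real n - x) * (\<psi> (real n) - \<psi> (real n + 1)) \<le> \<psi> x - \<psi> (real n)" by (simp add: algebra_simps)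
  also have "\<dots> \<le> \<psi> (real n)" using px by simp
  finally have A: "(real n - x) * (\<psi> (real n) - \<psi> (real n + 1)) \<le> \<psi> (real n)" .
  have nx: "real n - x = real n * L / (real n + L)" using L_pos nn by (simp add: x_def field_simps)
  have nxpos: "real n - x > 0" using xn by simp
  have "\<psi> (real n) - \<psi> (real n + 1) \<le> \<psi> (real n) / (real n - x)" using A nxpos by (simp add: field_simps)
  also have "\<dots> = \<psi> (real n) * (1 / L + 1 / real n)" using L_pos nn unfolding nx by (simp add: field_simps)
  also have "\<dots> \<le> \<psi> (real n) * (1 / L + 1 / (b * L))"
  proof -
    have "1 / real n \<le> 1 / (b * L)" using nL b2 L_pos n_pos by (intro divide_left_mono) (auto simp: zero_less_mult_iff)
    thus ?thesis using psin_pos by (intro mult_left_mono) auto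
  qed
  also have "\<dots> = \<psi> (real n) * (b + 1) / (b * L)" using b2 L_pos by (simp add: field_simps)
  finally show ?thesis .
qed

lemma Sb_le: "Sb \<le> 2 * \<psi> (real n) / L * (a / (a - 1) + (b + 1) / b)"
proof -
  have "Sb = 2 * \<psi> (real n) * (1 / real m) + 2 * (\<psi> (real n) - \<psi> (real n + 1))" by (simp add: Sb_def)
  also have "\<dots> \<le> 2 * \<psi> (real n) * (a / ((a - 1) * L)) + 2 * (\<psi> (real n) * (b + 1) / (b * L))"
    using inv_m step_bound psin_pos by (intro add_mono mult_left_mono) auto
  also have "\<dots> = 2 * \<psi> (real n) / L * (a / (a - 1) + (b + 1) / b)"
    using L_pos a1 b2 by (simp add: field_simps)
  finally show ?thesis .
qed

lemma sum_sin_bound: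
  "\<bar>\<Sum>j. d j * cos (real (j + p) * t - \<theta>)\<bar> * (4 * (sin (t / 2))^2) \<le> Sb"
proof -
  have c: "2 * cos t - 2 = - (4 * (sin (t / 2))^2)" using cos_double_sin[of "t/2"] by simp
  show ?thesis using main_bound[of t \<theta>] unfolding c by (simp add: abs_mult mult.commute)
qed

end


context PSn begin

lemma Psi_sin: "\<bar>Psi_star \<psi> \<beta> n t\<bar> * (4 * (sin (t / 2))^2) \<le> Sb"
  unfolding Psi_eq by (rule sum_sin_bound)

lemma Kp_le: "a / (a - 1) + (b + 1) / b \<le> 2 * (b + 1)\<^sup>2 / b\<^sup>2 + a / (a - 1)"
proof -
  define q where "q = (b + 1) / b"
  have q1: "q \<ge> 1" using b2 by (simp add: q_def)
  have "q * 1 \<le> q * q" using q1 by (intro mult_left_mono) auto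
  hence "q \<le> 2 * q^2" using q1 by (simp add: power2_eq_square)
  thus ?thesis by (simp add: q_def power_divide)
qed

lemma part1:
  assumes "0 < \<bar>t\<bar>" "\<bar>t\<bar> \<le> pi"
  shows "\<bar>Psi_star \<psi> \<beta> n t\<bar> \<le> pi\<^sup>2 * (2 * (b + 1)\<^sup>2 / b\<^sup>2 + a / (a - 1))
               * \<psi> (real n) / (eta \<psi> (real n) - real n) * (1 / t\<^sup>2)"
proof -
  have "2 * (\<bar>t\<bar> / 2) / pi \<le> sin (\<bar>t\<bar> / 2)" by (rule jordan) (use assms in auto)
  moreover have "sin (\<bar>t\<bar> / 2) = \<bar>sin (t / 2)\<bar>"
  proof (cases "t \<ge> 0")
    case True thus ?thesis using sin_ge_zero[of "t/2"] assms by simp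
  next
    case False thus ?thesis using sin_ge_zero[of "-t/2"] assms by (simp add: sin_minus)
  qed
  ultimately have sl: "\<bar>t\<bar> / pi \<le> \<bar>sin (t / 2)\<bar>" by simp
  have tp: "\<bar>t\<bar> / pi > 0" using assms by simp
  hence "(\<bar>t\<bar> / pi)^2 \<le> (sin (t / 2))^2" using sl by (metis power2_abs power_mono abs_ge_zero order_trans less_imp_le)
  hence s4: "4 * t\<^sup>2 / pi\<^sup>2 \<le> 4 * (sin (t / 2))^2" by (simp add: power_divide)
  have pos4: "4 * t\<^sup>2 / pi\<^sup>2 > 0" using assms by simp
  have "\<bar>Psi_star \<psi> \<beta> n t\<bar> * (4 * t\<^sup>2 / pi\<^sup>2) \<le> \<bar>Psi_star \<psi> \<beta> n t\<bar> * (4 * (sin (t / 2))^2)"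
    using s4 by (intro mult_left_mono) auto
  also have "\<dots> \<le> Sb" by (rule Psi_sin)
  also have "\<dots> \<le> 2 * \<psi> (real n) / L * (a / (a - 1) + (b + 1) / b)" by (rule Sb_le)
  also have "\<dots> \<le> 2 * \<psi> (real n) / L * (2 * (b + 1)\<^sup>2 / b\<^sup>2 + a / (a - 1))"
    using Kp_le psin_pos L_pos by (intro mult_left_mono) auto
  finally have "\<bar>Psi_star \<psi> \<beta> n t\<bar> \<le> 2 * \<psi> (real n) / L * (2 * (b + 1)\<^sup>2 / b\<^sup>2 + a / (a - 1)) / (4 * t\<^sup>2 / pi\<^sup>2)"
    by (simp only: pos_le_divide_eq[OF pos4])
  also have "\<dots> = pi\<^sup>2 * (2 * (b + 1)\<^sup>2 / b\<^sup>2 + a / (a - 1)) * \<psi> (real n) / L * (1 / t\<^sup>2) / 2"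
    using assms L_pos by (simp add: field_simps)
  also have "\<dots> \<le> pi\<^sup>2 * (2 * (b + 1)\<^sup>2 / b\<^sup>2 + a / (a - 1)) * \<psi> (real n) / L * (1 / t\<^sup>2)"
  proof -
    have "0 \<le> pi\<^sup>2 * (2 * (b + 1)\<^sup>2 / b\<^sup>2 + a / (a - 1)) * \<psi> (real n) / L * (1 / t\<^sup>2)"
      using a1 psin_pos L_pos by (intro mult_nonneg_nonneg divide_nonneg_nonneg) auto
    moreover have "\<And>X::real. 0 \<le> X \<Longrightarrow> X / 2 \<le> X" by simp
    ultimately show ?thesis by blast
  qed
  finally show ?thesis by (simp add: L_def)
qed

lemma dsum_lt_m: "(\<Sum>j<m. d j) = \<psi> (real n) * (real m - 1) / 2"
proof -
  have "(\<Sum>j<m. d j) = (\<Sum>j<m. \<psi> (real n) / real m * real j)"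
    by (intro sum.cong) (auto simp: d_lt)
  also have "\<dots> = \<psi> (real n) / real m * (\<Sum>j<m. real j)" by (simp add: sum_distrib_left)
  also have "(\<Sum>j<m. real j) = real m * (real m - 1) / 2" using sum_id_real[of m] by simp
  finally show ?thesis using mpos by simp
qed

lemma Psi_abs_le: "\<bar>Psi_star \<psi> \<beta> n t\<bar> \<le> \<psi> (real n) * (real m - 1) / 2 + Tb"
proof -
  have "\<bar>Psi_star \<psi> \<beta> n t\<bar> \<le> (\<Sum>j. \<bar>d j * cos (real (j + p) * t - \<beta> * pi / 2)\<bar>)"
    unfolding Psi_eq
    by (rule summable_rabs, rule summable_comparison_test'[OF d_summable, of 0]) (simp add: abs_mult d_nonneg mult_left_le)
  also have "\<dots> \<le> (\<Sum>j. d j)"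
    by (rule suminf_le) (auto simp: abs_mult d_nonneg mult_left_le d_summable
      intro: summable_comparison_test'[OF d_summable, of 0])
  also have "\<dots> = (\<Sum>i. d (i + m)) + (\<Sum>j<m. d j)" by (rule suminf_split_initial_segment[OF d_summable])
  also have "\<dots> \<le> Tb + \<psi> (real n) * (real m - 1) / 2" unfolding d_shift dsum_lt_m using tail_le by simp
  finally show ?thesis by simp
qed

lemma A_const: "\<psi> (real n) * (real m - 1) / 2 + Tb \<le> (2 * b / (b - 2) + 1 / a + 1 / 2) * \<psi> (real n) * L"
proof -
  have h1: "(real m - 1) / 2 \<le> L / 2 - 1 / 2" using m_le by simp
  have h2: "L / a \<ge> 1" using L_ge a1 by simp
  have "2 * b * L / (b - 2) \<ge> 2 * b * L / (b - 1)" using b2 L_pos by (intro divide_left_mono) auto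
  hence h3: "2 * b / (b - 2) * L \<ge> 2 * b * L / (b - 1)" by simp
  have h4: "b * L / (2 * (b - 1)) \<ge> 1 / 2"
  proof -
    have "b * L \<ge> b * 1" using b2 L_gt1 by (intro mult_left_mono) auto
    hence "b * L \<ge> b - 1" by simp
    thus ?thesis using b2 by (simp add: field_simps)
  qed
  define u where "u = b * L / (b - 1)"
  have u1: "2 * b * L / (b - 1) = 2 * u" by (simp add: u_def)
  have u2: "3 * L / 4 * (2 * b / (b - 1)) = 3 / 2 * u" by (simp add: u_def)
  have u3: "b * L / (2 * (b - 1)) = u / 2" by (simp add: u_def)
  have e1: "2 * b * L / (b - 1) = 3 * L / 4 * (2 * b / (b - 1)) + b * L / (2 * (b - 1))"
    unfolding u1 u2 u3 by simp
  have key: "(real m - 1) / 2 + (3 * L / 4 * (2 * b / (b - 1)) + 2) \<le> 2 * b / (b - 2) * L + L / a + L / 2"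
    using h1 h2 h3 h4 e1 by linarith
  have "\<psi> (real n) * (real m - 1) / 2 + Tb = \<psi> (real n) * ((real m - 1) / 2 + (3 * L / 4 * (2 * b / (b - 1)) + 2))"
    by (simp add: Tb_def algebra_simps)
  also have "\<dots> \<le> \<psi> (real n) * (2 * b / (b - 2) * L + L / a + L / 2)"
    using key psin_pos by (intro mult_left_mono) auto
  also have "\<dots> = (2 * b / (b - 2) + 1 / a + 1 / 2) * \<psi> (real n) * L" by (simp add: algebra_simps)
  finally show ?thesis .
qed

lemma part2: "\<bar>Psi_star \<psi> \<beta> n t\<bar> \<le> (2 * b / (b - 2) + 1 / a + 1 / 2) * \<psi> (real n) * (eta \<psi> (real n) - real n)"
  using Psi_abs_le[of \<beta> t] A_const by (simp add: L_def[symmetric])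

end



lemma cos_shift_nat: "cos (x - 2 * pi * real N) = cos x"
proof (induction N)
  case 0 thus ?case by simp
next
  case (Suc N)
  have "cos (x - 2 * pi * real (Suc N)) = cos ((x - 2 * pi * real (Suc N)) + 2 * pi)" by simp
  also have "(x - 2 * pi * real (Suc N)) + 2 * pi = x - 2 * pi * real N" by (simp add: algebra_simps)
  finally show ?case using Suc by simp
qed

lemma arctan_int1:
  fixes A k c :: real assumes "k > 0" "c \<ge> 0"
  shows "((\<lambda>t. 2 * A / (1 + (k * t)\<^sup>2)) has_integral (2 * A / k * arctan (k * c))) {0..c}"
proof -
  have "((\<lambda>t. 2 * A / (1 + (k * t)\<^sup>2)) has_integral (2 * A / k * arctan (k * c) - 2 * A / k * arctan (k * 0))) {0..c}"
  proof (rule fundamental_theorem_of_calculus[OF assms(2)])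
    fix x assume "x \<in> {0..c}"
    have "((\<lambda>t. 2 * A / k * arctan (k * t)) has_real_derivative 2 * A / k * (inverse (1 + (k * x)\<^sup>2) * k)) (at x within {0..c})"
      by (auto intro!: derivative_eq_intros)
    moreover have "2 * A / k * (inverse (1 + (k * x)\<^sup>2) * k) = 2 * A / (1 + (k * x)\<^sup>2)"
      using assms by (simp add: field_simps)
    ultimately show "((\<lambda>t. 2 * A / k * arctan (k * t)) has_vector_derivative 2 * A / (1 + (k * x)\<^sup>2)) (at x within {0..c})"
      by (simp add: has_real_derivative_iff_has_vector_derivative)
  qed
  thus ?thesis by simp
qed

lemma arctan_int2:
  fixes A k c :: real assumes "k > 0" "c \<ge> 0"
  shows "((\<lambda>t. 2 * A / (1 + (k * (c - t))\<^sup>2)) has_integral (2 * A / k * arctan (k * c))) {0..c}"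
proof -
  have "((\<lambda>t. 2 * A / (1 + (k * (c - t))\<^sup>2)) has_integral ((- (2 * A / k * arctan (k * (c - c)))) - (- (2 * A / k * arctan (k * (c - 0)))))) {0..c}"
  proof (rule fundamental_theorem_of_calculus[OF assms(2)])
    fix x assume "x \<in> {0..c}"
    have "((\<lambda>t. - (2 * A / k * arctan (k * (c - t)))) has_real_derivative - (2 * A / k * (inverse (1 + (k * (c - x))\<^sup>2) * (k * (0 - 1))))) (at x within {0..c})"
      by (auto intro!: derivative_eq_intros)
    moreover have "- (2 * A / k * (inverse (1 + (k * (c - x))\<^sup>2) * (k * (0 - 1)))) = 2 * A / (1 + (k * (c - x))\<^sup>2)"
      using assms by (simp add: field_simps)
    ultimately show "((\<lambda>t. - (2 * A / k * arctan (k * (c - t)))) has_vector_derivative 2 * A / (1 + (k * (c - x))\<^sup>2)) (at x within {0..c})"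
      by (simp add: has_real_derivative_iff_has_vector_derivative)
  qed
  thus ?thesis by simp
qed

lemma min_bound:
  fixes x A k u :: real
  assumes "0 \<le> x" "x \<le> A" "x * u\<^sup>2 \<le> A / k\<^sup>2" "k > 0"
  shows "x \<le> 2 * A / (1 + (k * u)\<^sup>2)"
proof -
  have "k\<^sup>2 * (x * u\<^sup>2) \<le> k\<^sup>2 * (A / k\<^sup>2)" using assms by (intro mult_left_mono) auto
  hence "x * (k * u)\<^sup>2 \<le> A" using assms by (simp add: power_mult_distrib algebra_simps)
  hence "x * (1 + (k * u)\<^sup>2) \<le> 2 * A" using assms by (simp add: algebra_simps)
  moreover have "1 + (k * u)\<^sup>2 > 0" by (simp add: add_pos_nonneg)
  ultimately show ?thesis by (simp add: field_simps)
qed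

context PSn begin

lemma Psi_cont: "continuous_on UNIV (Psi_star \<psi> \<beta> n)"
proof -
  have ul: "uniform_limit UNIV (\<lambda>N t. \<Sum>j<N. d j * cos (real (j + p) * t - \<beta> * pi / 2))
      (\<lambda>t. \<Sum>j. d j * cos (real (j + p) * t - \<beta> * pi / 2)) sequentially"
    by (rule Weierstrass_m_test[OF _ d_summable]) (simp add: abs_mult d_nonneg mult_left_le)
  have "continuous_on UNIV (\<lambda>t. \<Sum>j. d j * cos (real (j + p) * t - \<beta> * pi / 2))"
    by (rule uniform_limit_theorem[OF _ ul]) (intro always_eventually allI continuous_intros, simp)
  moreover have "Psi_star \<psi> \<beta> n = (\<lambda>t. \<Sum>j. d j * cos (real (j + p) * t - \<beta> * pi / 2))"
    by (rule ext) (rule Psi_eq)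
  ultimately show ?thesis by simp
qed

lemma Psi_periodic: "Psi_star \<psi> \<beta> n (t - 2 * pi) = Psi_star \<psi> \<beta> n t"
proof -
  have "\<And>j. cos (real (j + p) * (t - 2 * pi) - \<beta> * pi / 2) = cos (real (j + p) * t - \<beta> * pi / 2)"
  proof -
    fix j
    have e: "real (j + p) * (t - 2 * pi) - \<beta> * pi / 2 = (real (j + p) * t - \<beta> * pi / 2) - 2 * pi * real (j + p)"
      by (simp add: algebra_simps)
    show "cos (real (j + p) * (t - 2 * pi) - \<beta> * pi / 2) = cos (real (j + p) * t - \<beta> * pi / 2)"
      unfolding e by (rule cos_shift_nat)
  qed
  thus ?thesis unfolding Psi_eq by simp
qed

end


context PSn begin

definition "K = 2 * b / (b - 2) + a / (a - 1)"
definition "AA = K * \<psi> (real n) * L"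
definition "kk = L / pi"

lemma K_ge: "2 * b / (b - 2) + 1 / a + 1 / 2 \<le> K"
proof -
  have "a / (a - 1) = 1 + 1 / (a - 1)" using a1 by (simp add: field_simps)
  moreover have "1 / a \<le> 1 / (a - 1)" using a1 by (intro divide_left_mono) auto
  ultimately show ?thesis unfolding K_def by linarith
qed

lemma T_le_K: "2 * (b + 1)\<^sup>2 / b\<^sup>2 + a / (a - 1) \<le> K"
proof -
  have "(b + 1)\<^sup>2 * (b - 2) \<le> b\<^sup>2 * b"
  proof -
    have "(b + 1)\<^sup>2 * (b - 2) = b\<^sup>2 * b - 3 * b - 2" by (simp add: power2_eq_square algebra_simps)
    thus ?thesis using b2 by simp
  qed
  hence "2 * (b + 1)\<^sup>2 / b\<^sup>2 \<le> 2 * b / (b - 2)" using b2 by (simp add: field_simps)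
  thus ?thesis unfolding K_def by simp
qed

lemma K_pos: "K > 0"
proof -
  have "2 * b / (b - 2) > 0" "a / (a - 1) > 0" using b2 a1 by simp_all
  thus ?thesis unfolding K_def by linarith
qed
lemma AA_pos: "AA > 0" using K_pos psin_pos L_pos by (simp add: AA_def)
lemma kk_pos: "kk > 0" using L_pos by (simp add: kk_def)
lemma A_k2: "AA / kk\<^sup>2 = pi\<^sup>2 * K * \<psi> (real n) / L"
  using L_pos by (simp add: AA_def kk_def power2_eq_square field_simps)

lemma absPsi_A: "\<bar>Psi_star \<psi> \<beta> n t\<bar> \<le> AA"
proof -
  have "\<bar>Psi_star \<psi> \<beta> n t\<bar> \<le> (2 * b / (b - 2) + 1 / a + 1 / 2) * \<psi> (real n) * L"
    using part2 by (simp add: L_def)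
  also have "\<dots> \<le> K * \<psi> (real n) * L" using K_ge psin_pos L_pos by (intro mult_right_mono) auto
  finally show ?thesis by (simp add: AA_def)
qed

lemma absPsi_t2:
  assumes "\<bar>t\<bar> \<le> pi"
  shows "\<bar>Psi_star \<psi> \<beta> n t\<bar> * t\<^sup>2 \<le> AA / kk\<^sup>2"
proof (cases "t = 0")
  case True thus ?thesis using AA_pos kk_pos by simp
next
  case False
  hence tp: "t\<^sup>2 > 0" by simp
  have "\<bar>Psi_star \<psi> \<beta> n t\<bar> \<le> pi\<^sup>2 * (2 * (b + 1)\<^sup>2 / b\<^sup>2 + a / (a - 1)) * \<psi> (real n) / L * (1 / t\<^sup>2)"
    using part1[of t] False assms by (simp add: L_def)
  hence "\<bar>Psi_star \<psi> \<beta> n t\<bar> * t\<^sup>2 \<le> (pi\<^sup>2 * (2 * (b + 1)\<^sup>2 / b\<^sup>2 + a / (a - 1)) * \<psi> (real n) / L * (1 / t\<^sup>2)) * t\<^sup>2"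
    using tp by (intro mult_right_mono) auto
  also have "\<dots> = pi\<^sup>2 * (2 * (b + 1)\<^sup>2 / b\<^sup>2 + a / (a - 1)) * \<psi> (real n) / L"
    using tp by simp
  also have "\<dots> \<le> pi\<^sup>2 * K * \<psi> (real n) / L"
    using T_le_K psin_pos L_pos by (intro divide_right_mono mult_right_mono mult_left_mono) auto
  finally show ?thesis by (simp add: A_k2)
qed

definition "hh t = 2 * AA / (1 + (kk * t)\<^sup>2) + 2 * AA / (1 + (kk * (2 * pi - t))\<^sup>2)"

lemma hh_nonneg: "hh t \<ge> 0"
  using AA_pos by (simp add: hh_def add_pos_nonneg less_imp_le)

lemma majorant:
  assumes "t \<in> {0..2 * pi}"
  shows "\<bar>Psi_star \<psi> \<beta> n t\<bar> \<le> hh t"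
proof (cases "t \<le> pi")
  case True
  have "\<bar>Psi_star \<psi> \<beta> n t\<bar> \<le> 2 * AA / (1 + (kk * t)\<^sup>2)"
    by (rule min_bound[OF _ absPsi_A absPsi_t2 kk_pos]) (use True assms in auto)
  moreover have "0 \<le> 2 * AA / (1 + (kk * (2 * pi - t))\<^sup>2)" using AA_pos by (simp add: add_pos_nonneg less_imp_le)
  ultimately show ?thesis by (simp add: hh_def)
next
  case False
  have "\<bar>Psi_star \<psi> \<beta> n (t - 2 * pi)\<bar> * (t - 2 * pi)\<^sup>2 \<le> AA / kk\<^sup>2"
    by (rule absPsi_t2) (use False assms in auto)
  hence "\<bar>Psi_star \<psi> \<beta> n t\<bar> * (2 * pi - t)\<^sup>2 \<le> AA / kk\<^sup>2"
    by (simp add: Psi_periodic power2_commute)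
  hence "\<bar>Psi_star \<psi> \<beta> n t\<bar> \<le> 2 * AA / (1 + (kk * (2 * pi - t))\<^sup>2)"
    by (intro min_bound[OF _ absPsi_A _ kk_pos]) auto
  moreover have "0 \<le> 2 * AA / (1 + (kk * t)\<^sup>2)" using AA_pos by (simp add: add_pos_nonneg less_imp_le)
  ultimately show ?thesis by (simp add: hh_def)
qed

lemma hh_int: "(hh has_integral (2 * AA / kk * arctan (kk * (2 * pi)) + 2 * AA / kk * arctan (kk * (2 * pi)))) {0..2 * pi}"
proof -
  have "((\<lambda>t. 2 * AA / (1 + (kk * t)\<^sup>2) + 2 * AA / (1 + (kk * (2 * pi - t))\<^sup>2)) has_integral
     (2 * AA / kk * arctan (kk * (2 * pi)) + 2 * AA / kk * arctan (kk * (2 * pi)))) {0..2 * pi}"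
    by (intro has_integral_add arctan_int1 arctan_int2 kk_pos) auto
  thus ?thesis unfolding hh_def[abs_def] .
qed

lemma hh_int_le: "integral {0..2 * pi} hh \<le> 2 * pi\<^sup>2 * K * \<psi> (real n)"
proof -
  have "integral {0..2 * pi} hh = 4 * AA / kk * arctan (kk * (2 * pi))" using integral_unique[OF hh_int] by simp
  also have "\<dots> \<le> 4 * AA / kk * (pi / 2)"
    using arctan_ubound[of "kk * (2 * pi)"] AA_pos kk_pos by (intro mult_left_mono) auto
  also have "\<dots> = 2 * pi\<^sup>2 * K * \<psi> (real n)" using L_pos by (simp add: AA_def kk_def power2_eq_square field_simps)
  finally show ?thesis .
qed

end


context PSn begin

lemma part3:
  assumes q: "1 \<le> q"
  shows "(LINT t:{0..2*pi}|lborel. \<bar>Psi_star \<psi> \<beta> n t\<bar> powr q) powr (1 / q)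
      \<le> 2 * (1 + pi\<^sup>2) * K * \<psi> (real n) * L powr (1 - 1 / q)"
proof -
  define f where "f t = \<bar>Psi_star \<psi> \<beta> n t\<bar> powr q" for t
  define V where "V = 2 * pi\<^sup>2 * K * \<psi> (real n)"
  define P where "P = K * \<psi> (real n)"
  have Ppos: "P > 0" using K_pos psin_pos by (simp add: P_def)
  have AP: "AA = P * L" by (simp add: AA_def P_def)
  have VP: "V = 2 * pi\<^sup>2 * P" by (simp add: V_def P_def)
  have cPsi: "continuous_on {0..2*pi} (\<lambda>t. \<bar>Psi_star \<psi> \<beta> n t\<bar>)"
    by (intro continuous_intros continuous_on_subset[OF Psi_cont]) auto
  have cf: "continuous_on {0..2*pi} f"
    unfolding f_def using q by (intro continuous_on_powr' cPsi continuous_on_const) auto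
  have si: "set_integrable lborel {0..2*pi} f" by (rule borel_integrable_atLeastAtMost'[OF cf])
  have LI: "(LINT t:{0..2*pi}|lborel. f t) = integral {0..2*pi} f"
    by (rule set_borel_integral_eq_integral(2)[OF si])
  have fi: "f integrable_on {0..2*pi}" by (rule set_borel_integral_eq_integral(1)[OF si])
  have hi: "hh integrable_on {0..2*pi}" using hh_int by (rule has_integral_integrable)
  have gi: "(\<lambda>t. AA powr (q - 1) * hh t) integrable_on {0..2*pi}"
    by (rule integrable_on_mult_right[OF hi])
  have fg: "f t \<le> AA powr (q - 1) * hh t" if t: "t \<in> {0..2*pi}" for t
  proof (cases "Psi_star \<psi> \<beta> n t = 0")
    case True
    thus ?thesis using hh_nonneg[of t] by (simp add: f_def)
  next
    case False
    define x where "x = \<bar>Psi_star \<psi> \<beta> n t\<bar>"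
    have x0: "x > 0" using False by (simp add: x_def)
    have "f t = x powr ((q - 1) + 1)" by (simp add: f_def x_def)
    also have "\<dots> = x powr (q - 1) * x powr 1" by (rule powr_add)
    also have "\<dots> = x powr (q - 1) * x" using x0 by simp
    also have "\<dots> \<le> AA powr (q - 1) * hh t"
    proof (rule mult_mono)
      show "x powr (q - 1) \<le> AA powr (q - 1)" using q x0 absPsi_A by (intro powr_mono2) (auto simp: x_def)
      show "x \<le> hh t" using majorant[OF t] by (simp add: x_def)
    qed (use x0 in auto)
    finally show ?thesis .
  qed
  have "integral {0..2*pi} f \<le> integral {0..2*pi} (\<lambda>t. AA powr (q - 1) * hh t)"
    by (rule integral_le[OF fi gi fg])
  also have "\<dots> = AA powr (q - 1) * integral {0..2*pi} hh" by simp
  also have "\<dots> \<le> AA powr (q - 1) * V" unfolding V_def using hh_int_le by (intro mult_left_mono) auto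
  finally have Ile: "(LINT t:{0..2*pi}|lborel. f t) \<le> AA powr (q - 1) * V" unfolding LI .
  have I0: "0 \<le> (LINT t:{0..2*pi}|lborel. f t)"
    unfolding LI by (rule integral_nonneg[OF fi]) (simp add: f_def)
  have "(LINT t:{0..2*pi}|lborel. f t) powr (1 / q) \<le> (AA powr (q - 1) * V) powr (1 / q)"
    using q by (intro powr_mono2 I0 Ile) auto
  also have "\<dots> = (AA powr (q - 1)) powr (1 / q) * V powr (1 / q)" by (rule powr_mult)
  also have "\<dots> = AA powr (1 - 1 / q) * V powr (1 / q)"
    using q by (simp add: powr_powr field_simps)
  also have "\<dots> = (P powr (1 - 1 / q) * P powr (1 / q)) * (2 * pi\<^sup>2) powr (1 / q) * L powr (1 - 1 / q)"
    unfolding AP VP by (simp add: powr_mult)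
  also have "P powr (1 - 1 / q) * P powr (1 / q) = P"
    using Ppos by (simp add: powr_add[symmetric])
  also have "P * (2 * pi\<^sup>2) powr (1 / q) * L powr (1 - 1 / q) \<le> P * (2 * (1 + pi\<^sup>2)) * L powr (1 - 1 / q)"
  proof -
    have "pi * pi \<ge> 2 * 2" using pi_ge_two by (intro mult_mono) auto
    hence "1 \<le> 2 * pi\<^sup>2" by (simp add: power2_eq_square)
    hence "(2 * pi\<^sup>2) powr (1 / q) \<le> (2 * pi\<^sup>2) powr 1"
      using q by (intro powr_mono) auto
    also have "\<dots> \<le> 2 * (1 + pi\<^sup>2)" by simp
    finally show ?thesis using Ppos by (intro mult_right_mono mult_left_mono) auto
  qed
  finally show ?thesis by (simp add: f_def P_def mult.assoc mult.left_commute)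
qed

lemma part4:
  "esssup (restrict_space lborel {0..2*pi}) (\<lambda>t. ereal \<bar>Psi_star \<psi> \<beta> n t\<bar>)
      \<le> ereal (2 * (1 + pi\<^sup>2) * K * \<psi> (real n) * L)"
proof (rule esssup_I)
  have "Psi_star \<psi> \<beta> n \<in> borel_measurable borel" by (rule borel_measurable_continuous_onI[OF Psi_cont])
  hence "Psi_star \<psi> \<beta> n \<in> borel_measurable lborel" by simp
  hence "Psi_star \<psi> \<beta> n \<in> borel_measurable (restrict_space lborel {0..2*pi})"
    by (rule measurable_restrict_space1)
  thus "(\<lambda>t. ereal \<bar>Psi_star \<psi> \<beta> n t\<bar>) \<in> borel_measurable (restrict_space lborel {0..2*pi})"
    by measurable
  have "\<bar>Psi_star \<psi> \<beta> n t\<bar> \<le> 2 * (1 + pi\<^sup>2) * K * \<psi> (real n) * L" for t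
  proof -
    have "\<bar>Psi_star \<psi> \<beta> n t\<bar> \<le> AA" by (rule absPsi_A)
    also have "AA \<le> 2 * (1 + pi\<^sup>2) * AA"
    proof -
      have "1 * AA \<le> (2 * (1 + pi\<^sup>2)) * AA" using AA_pos by (intro mult_right_mono) (auto simp: add_pos_nonneg)
      thus ?thesis by simp
    qed
    also have "\<dots> = 2 * (1 + pi\<^sup>2) * (K * \<psi> (real n) * L)" by (simp add: AA_def)
    finally show ?thesis by (simp add: mult.assoc)
  qed
  thus "AE t in restrict_space lborel {0..2*pi}. ereal \<bar>Psi_star \<psi> \<beta> n t\<bar> \<le> ereal (2 * (1 + pi\<^sup>2) * K * \<psi> (real n) * L)"
    by simp
qed

end

theorem mainTheorem9:
  fixes \<psi> :: "real \<Rightarrow> real" and \<beta> a b :: real and n :: nat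
  assumes psi: "classMplus_inf \<psi>"
    and n1: "n \<ge> 1"
    and a: "eta \<psi> (real n) - real n \<ge> a" "a > 1"
    and b: "mu \<psi> (real n) \<ge> b" "b > 2"
  shows "(\<forall>t. 0 < \<bar>t\<bar> \<and> \<bar>t\<bar> \<le> pi \<longrightarrow>
            \<bar>Psi_star \<psi> \<beta> n t\<bar> \<le> pi\<^sup>2 * (2 * (b + 1)\<^sup>2 / b\<^sup>2 + a / (a - 1))
               * \<psi> (real n) / (eta \<psi> (real n) - real n) * (1 / t\<^sup>2))
       \<and> (\<forall>t. \<bar>Psi_star \<psi> \<beta> n t\<bar> \<le> (2 * b / (b - 2) + 1 / a + 1 / 2)
               * \<psi> (real n) * (eta \<psi> (real n) - real n))
       \<and> (\<forall>q::real. 1 \<le> q \<longrightarrow>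
            (LINT t:{0..2*pi}|lborel. \<bar>Psi_star \<psi> \<beta> n t\<bar> powr q) powr (1 / q)
              \<le> 2 * (1 + pi\<^sup>2) * (2 * b / (b - 2) + a / (a - 1)) * \<psi> (real n)
                 * (eta \<psi> (real n) - real n) powr (1 - 1 / q))
       \<and> esssup (restrict_space lborel {0..2*pi}) (\<lambda>t. ereal \<bar>Psi_star \<psi> \<beta> n t\<bar>)
              \<le> ereal (2 * (1 + pi\<^sup>2) * (2 * b / (b - 2) + a / (a - 1)) * \<psi> (real n)
                 * (eta \<psi> (real n) - real n))"
proof -
  have cM: "classM \<psi>" and mm: "mono_on {1..} (mu \<psi>)" using psi by (auto simp: classMplus_inf_def)
  interpret PSn \<psi> n a b
    using cM mm n1 a b by unfold_locales (auto simp: classM_def)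
  show ?thesis
    using part1 part2 part3 part4 unfolding K_def L_def by blast
qed

end
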